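(* Let $\mathcal N$ be a network with a binary collision profile and character $D^*$, let $T\ge\max(D^*,1)$ be an integer, and let $(A_0,A_1,\dots,A_k)$, $k\ge1$, be a closed path in $(\mathcal M_T,\mathcal E_T)$. Define the schedule $S$ of period $kT$ by $S[T,ak+i]=A_i$ for all $a\in\mathbb Z$ and $i=0,\dots,k-1$. Then $S$ is collision free.
   Context: A network is a triple $\mathcal N=(\mathcal L,\mathcal I,D_{\mathcal L})$ where $\mathcal L$ is a finite nonempty set of links, each $\mathcal I(l)$ is a collection of nonempty subsets of $\mathcal L$, and $D_{\mathcal L}$ assigns an integer $D_{\mathcal L}(l,l')$ to every pair with $l'\in\phi$ for some $\phi\in\mathcal I(l)$. The profile is binary if every $\phi\in\mathcal I(l)$ is a singleton. The character is $D^*=\max_{l}\max_{\phi\in\mathcal I(l)}\max_{l'\in\phi}|D_{\mathcal L}(l,l')|$ (0 if there are no collision sets). A schedule is a map $S:\mathcal L\times\mathbb Z\to\{0,1\}$; $S(l,t)$ has a collision if there is $\phi\in\mathcal I(l)$ with $S(l',t+D_{\mathcal L}(l,l'))=1$ for all $l'\in\phi$; $S$ is collision free if no $(l,t)$ with $S(l,t)=1$ has a collision. $S[T,k]$ is the $|\mathcal L|\times T$ binary matrix with $S[T,k](l,j)=S(l,kT+j)$, $j=0,\dots,T-1$. The scheduling graph $(\mathcal M_T,\mathcal E_T)$ has vertex set $\mathcal M_T$ = all $|\mathcal L|\times T$ binary matrices $A$ with $A=S'[T,0]$ for some collision-free schedule $S'$, and edge set $\mathcal E_T$ = all pairs $(A,B)$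 with $A=S'[T,0]$, $B=S'[T,1]$ for some collision-free schedule $S'$. A closed path is a sequence $(A_0,\dots,A_k)$ with $(A_i,A_{i+1})\in\mathcal E_T$ for all $i$ and $A_k=A_0$. *)

theory Defs
  imports Main
begin

text \<open>A network (L, I, D): links of type 'l, L the finite nonempty link set,
  I l the collision sets of link l, D the integer delays.
  A schedule is a map 'l => int => bool (True meaning the value 1).\<close>

definition network :: "'l set \<Rightarrow> ('l \<Rightarrow> 'l set set) \<Rightarrow> ('l \<Rightarrow> 'l \<Rightarrow> int) \<Rightarrow> bool" where
  "network L I D \<longleftrightarrow> finite L \<and> L \<noteq> {} \<and>
     (\<forall>l\<in>L. \<forall>\<phi>\<in>I l. \<phi> \<noteq> {} \<and> \<phi> \<subseteq> L)"

definition binary_profile :: "'l set \<Rightarrow> ('l \<Rightarrow> 'l set set) \<Rightarrow> bool" where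
  "binary_profile L I \<longleftrightarrow> (\<forall>l\<in>L. \<forall>\<phi>\<in>I l. \<exists>x. \<phi> = {x})"

definition character :: "'l set \<Rightarrow> ('l \<Rightarrow> 'l set set) \<Rightarrow> ('l \<Rightarrow> 'l \<Rightarrow> int) \<Rightarrow> int" where
  "character L I D = Max ({0} \<union> {\<bar>D l l'\<bar> | l \<phi> l'. l \<in> L \<and> \<phi> \<in> I l \<and> l' \<in> \<phi>})"

definition has_collision :: "('l \<Rightarrow> 'l set set) \<Rightarrow> ('l \<Rightarrow> 'l \<Rightarrow> int) \<Rightarrow> ('l \<Rightarrow> int \<Rightarrow> bool) \<Rightarrow> 'l \<Rightarrow> int \<Rightarrow> bool" where
  "has_collision I D S l t \<longleftrightarrow> (\<exists>\<phi>\<in>I l. \<forall>l'\<in>\<phi>. S l' (t + D l l'))"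

definition collision_free :: "'l set \<Rightarrow> ('l \<Rightarrow> 'l set set) \<Rightarrow> ('l \<Rightarrow> 'l \<Rightarrow> int) \<Rightarrow> ('l \<Rightarrow> int \<Rightarrow> bool) \<Rightarrow> bool" where
  "collision_free L I D S \<longleftrightarrow> (\<forall>l\<in>L. \<forall>t. S l t \<longrightarrow> \<not> has_collision I D S l t)"

text \<open>S[T,k]: the |L| x T binary matrix, represented as a function on L x {0..<T}
  (canonically False outside that index set).\<close>
definition block :: "'l set \<Rightarrow> ('l \<Rightarrow> int \<Rightarrow> bool) \<Rightarrow> nat \<Rightarrow> int \<Rightarrow> ('l \<Rightarrow> nat \<Rightarrow> bool)" where
  "block L S T k = (\<lambda>l j. l \<in> L \<and> j < T \<and> S l (k * int T + int j))"

definition sched_vertices :: "'l set \<Rightarrow> ('l \<Rightarrow> 'l set set) \<Rightarrow> ('l \<Rightarrow> 'l \<Rightarrow> int) \<Rightarrow> nat \<Rightarrow> ('l \<Rightarrow> nat \<Rightarrow> bool) set" where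
  "sched_vertices L I D T = {A. \<exists>S'. collision_free L I D S' \<and> A = block L S' T 0}"

definition sched_edges :: "'l set \<Rightarrow> ('l \<Rightarrow> 'l set set) \<Rightarrow> ('l \<Rightarrow> 'l \<Rightarrow> int) \<Rightarrow> nat \<Rightarrow> (('l \<Rightarrow> nat \<Rightarrow> bool) \<times> ('l \<Rightarrow> nat \<Rightarrow> bool)) set" where
  "sched_edges L I D T = {(A, B). \<exists>S'. collision_free L I D S' \<and> A = block L S' T 0 \<and> B = block L S' T 1}"

definition closed_path :: "'l set \<Rightarrow> ('l \<Rightarrow> 'l set set) \<Rightarrow> ('l \<Rightarrow> 'l \<Rightarrow> int) \<Rightarrow> nat \<Rightarrow> (nat \<Rightarrow> ('l \<Rightarrow> nat \<Rightarrow> bool)) \<Rightarrow> nat \<Rightarrow> bool" where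
  "closed_path L I D T A k \<longleftrightarrow> (\<forall>i<k. (A i, A (Suc i)) \<in> sched_edges L I D T) \<and> A k = A 0"

end

theory Submission
  imports Defs
begin

lemma char_bound:
  assumes "network L I D" "l \<in> L" "\<phi> \<in> I l" "l' \<in> \<phi>"
  shows "\<bar>D l l'\<bar> \<le> character L I D"
proof -
  have sub: "{\<bar>D l l'\<bar> | l \<phi> l'. l \<in> L \<and> \<phi> \<in> I l \<and> l' \<in> \<phi>} \<subseteq> (\<lambda>(l,l'). \<bar>D l l'\<bar>) ` (L \<times> L)"
    using assms(1) unfolding network_def by fastforce
  have fin: "finite (L \<times> L)" using assms(1) unfolding network_def by auto
  have "finite ({0} \<union> {\<bar>D l l'\<bar> | l \<phi> l'. l \<in> L \<and> \<phi> \<in> I l \<and> l' \<in> \<phi>})"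
    using finite_subset[OF sub] fin by auto
  moreover have "\<bar>D l l'\<bar> \<in> {0} \<union> {\<bar>D l l'\<bar> | l \<phi> l'. l \<in> L \<and> \<phi> \<in> I l \<and> l' \<in> \<phi>}"
    using assms by blast
  ultimately show ?thesis unfolding character_def by (rule Max_ge)
qed

lemma edge_blocks:
  assumes "k \<ge> 1" "closed_path L I D T A k"
    and "\<forall>a::int. \<forall>i<k. block L S T (a * int k + int i) = A i"
  shows "(block L S T m, block L S T (m+1)) \<in> sched_edges L I D T"
proof -
  define i where "i = nat (m mod int k)"
  define a where "a = m div int k"
  have ik: "i < k" using assms(1) unfolding i_def by (simp add: nat_less_iff)
  have m: "m = a * int k + int i" using assms(1) unfolding i_def a_def by simp
  have Bm: "block L S T m = A i" using assms(3) ik m by auto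
  have Bm1: "block L S T (m+1) = A (Suc i)"
  proof (cases "Suc i < k")
    case True
    have "m + 1 = a * int k + int (Suc i)" using m by simp
    then show ?thesis using assms(3) True by metis
  next
    case False
    then have "Suc i = k" using ik by simp
    then have "m + 1 = (a+1) * int k + int 0" using m by (simp add: algebra_simps)
    moreover have "A k = A 0" using assms(2) unfolding closed_path_def by simp
    ultimately show ?thesis using assms(3,1) \<open>Suc i = k\<close> by (metis One_nat_def le_simps(3) less_one)
  qed
  show ?thesis using assms(2) ik Bm Bm1 unfolding closed_path_def by auto
qed

lemma local_free:
  assumes "(block L S T m, block L S T (m+1)) \<in> sched_edges L I D T"
    and "l \<in> L" "l' \<in> L" "0 \<le> j0" "j0 < 2 * int T" "0 \<le> j1" "j1 < 2 * int T"
    and "S l (m * int T + j0)" "{l'} \<in> I l" "j1 = j0 + D l l'"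
  shows "\<not> S l' (m * int T + j1)"
proof
  assume Sl': "S l' (m * int T + j1)"
  obtain S' where cf: "collision_free L I D S'" and b0: "block L S T m = block L S' T 0"
    and b1: "block L S T (m+1) = block L S' T 1"
    using assms(1) unfolding sched_edges_def by auto
  have tr: "S' x y = S x (m * int T + y)" if "x \<in> L" "0 \<le> y" "y < 2 * int T" for x y
  proof (cases "y < int T")
    case True
    have "block L S T m x (nat y) = block L S' T 0 x (nat y)" using b0 by simp
    moreover have "nat y < T" using that True by linarith
    ultimately show ?thesis using that True by (simp add: block_def)
  next
    case False
    have "block L S T (m+1) x (nat (y - int T)) = block L S' T 1 x (nat (y - int T))" using b1 by simp
    moreover have "nat (y - int T) < T" using that False by linarith
    ultimately show ?thesis using that False by (simp add: block_def algebra_simps)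
  qed
  have "S' l j0" using tr assms by auto
  moreover have "S' l' (j0 + D l l')" using tr assms Sl' by auto
  ultimately have "has_collision I D S' l j0" using assms(9) unfolding has_collision_def by auto
  then show False using cf assms(2) \<open>S' l j0\<close> unfolding collision_free_def by blast
qed

theorem lemma4:
  fixes L :: "'l set" and I :: "'l \<Rightarrow> 'l set set" and D :: "'l \<Rightarrow> 'l \<Rightarrow> int"
    and T k :: nat and A :: "nat \<Rightarrow> ('l \<Rightarrow> nat \<Rightarrow> bool)" and S :: "'l \<Rightarrow> int \<Rightarrow> bool"
  assumes "network L I D"
    and "binary_profile L I"
    and "int T \<ge> max (character L I D) 1"
    and "k \<ge> 1"
    and "closed_path L I D T A k"
    and "\<forall>a::int. \<forall>i<k. block L S T (a * int k + int i) = A i"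
  shows "collision_free L I D S"
  unfolding collision_free_def has_collision_def
proof (intro ballI allI impI notI)
  fix l t \<phi>
  assume l: "l \<in> L" and St: "S l t" and ex: "\<exists>\<phi>\<in>I l. \<forall>l'\<in>\<phi>. S l' (t + D l l')"
  then obtain \<phi> where ph: "\<phi> \<in> I l" and all: "\<forall>l'\<in>\<phi>. S l' (t + D l l')" by blast
  obtain l' where phi: "\<phi> = {l'}" using assms(2) l ph unfolding binary_profile_def by blast
  have l': "l' \<in> L" using assms(1) l ph phi unfolding network_def by auto
  have Sl': "S l' (t + D l l')" using all phi by auto
  have dT: "\<bar>D l l'\<bar> \<le> int T" using char_bound[OF assms(1) l ph] phi assms(3) by auto
  have Tpos: "int T \<ge> 1" using assms(3) by auto
  define m where "m = t div int T"
  define j where "j = t mod int T"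
  have t: "t = m * int T + j" unfolding m_def j_def by simp
  have j: "0 \<le> j" "j < int T" unfolding j_def using Tpos by auto
  have E: "\<And>m. (block L S T m, block L S T (m+1)) \<in> sched_edges L I D T"
    using edge_blocks[OF assms(4,5,6)] by blast
  show False
  proof (cases "j + D l l' \<ge> 0")
    case True
    have "\<not> S l' (m * int T + (j + D l l'))"
      by (rule local_free[OF E l l' _ _ _ _ _ _ refl]) (use j True dT St t ph phi in auto)
    then show False using Sl' t by (simp add: algebra_simps)
  next
    case False
    have E': "(block L S T (m-1), block L S T ((m-1)+1)) \<in> sched_edges L I D T" by (rule E)
    have "\<not> S l' ((m-1) * int T + (j + int T + D l l'))"
      by (rule local_free[OF E' l l' _ _ _ _ _ _ refl]) (use j False dT St t ph phi in \<open>auto simp: algebra_simps\<close>)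
    then show False using Sl' t by (simp add: algebra_simps)
  qed
qed

end
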